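(* There exist a nondeterministic probabilistic automaton $\mathcal{B}$, a regular predicate $\varphi$ and an observation function $\mathcal{O}$ such that the value $\widehat{\mathrm{PO}^A_r}(\mathcal{B},\varphi,\mathcal{O}) = \min_{\sigma} \mathrm{PO}^A_r(\mathcal{B}_{/\sigma},\varphi,\mathcal{O})$ (minimum over all schedulers $\sigma$) cannot be reached by a memoryless scheduler.
   Context: A nondeterministic probabilistic automaton (NPA) is a tuple $\langle \Sigma, Q, \Delta, q_0 \rangle$ with $\Sigma$ a finite alphabet, $Q$ a finite set of states, $q_0$ the initial state, and $\Delta$ mapping each state to a finite set of probability distributions over $(\Sigma \times Q) \uplus \{\mathrm{stop}\}$, where $\mathrm{stop}$ is a special termination action. A scheduler is a function $\sigma$ from finite runs of the NPA to distributions over such distributions, with $\sigma(\rho)(\nu)>0$ only if $\nu \in \Delta(\text{last state of }\rho)$; it is memoryless if $\sigma(\rho)$ depends only on the last state of $\rho$. The scheduled automaton $\mathcal{B}_{/\sigma}$ is the (possibly infinite) fully probabilistic automaton whose states are runs, with $\Delta'(\rho)(a,\rho\xrightarrow{a}q') = \sum_{\mu \in \Delta(q)} \sigma(\rho)(\mu)\cdot\mu(a,q')$ ($q$ the last state of $\rho$), and similarly for termination. On a fully probabilistic automaton with distribution $\mathbf{P}$ on complete runs (finite runs followed by termination), restrictive probabilistic opacity is defined by $\frac{1}{\mathrm{PO}^A_r(\mathcal{A},\varphi,\mathcal{O})} = \sum_{o} \mathbf{P}(\mathcal{O}=o)/\mathbf{P}(\mathbf{1}_\varphi=0\mid\mathcal{O}=o)$.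 *)

theory Defs
  imports "HOL-Probability.Probability"
begin

text \<open>A distribution over
  (Sigma x Q) + {stop} is a pmf on option type, None being the stop action.
  A finite run from q0 is the list of its transitions (a_1,q_1)...(a_n,q_n).\<close>

definition npa :: "'a set \<Rightarrow> 's set \<Rightarrow> ('s \<Rightarrow> ('a \<times> 's) option pmf set) \<Rightarrow> 's \<Rightarrow> bool" where
  "npa Sig Q Delta q0 \<longleftrightarrow> finite Sig \<and> finite Q \<and> q0 \<in> Q \<and>
     (\<forall>q\<in>Q. finite (Delta q) \<and> Delta q \<noteq> {} \<and>
        (\<forall>\<mu>\<in>Delta q. \<forall>x\<in>set_pmf \<mu>. case x of None \<Rightarrow> True | Some (a, q') \<Rightarrow> a \<in> Sig \<and> q' \<in> Q))"

definition last_state :: "'s \<Rightarrow> ('a \<times> 's) list \<Rightarrow> 's" where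
  "last_state q0 \<rho> = (if \<rho> = [] then q0 else snd (last \<rho>))"

definition scheduler :: "'a set \<Rightarrow> 's set \<Rightarrow> ('s \<Rightarrow> ('a \<times> 's) option pmf set) \<Rightarrow> 's
    \<Rightarrow> (('a \<times> 's) list \<Rightarrow> ('a \<times> 's) option pmf pmf) \<Rightarrow> bool" where
  "scheduler Sig Q Delta q0 \<sigma> \<longleftrightarrow>
     (\<forall>\<rho>\<in>lists (Sig \<times> Q). set_pmf (\<sigma> \<rho>) \<subseteq> Delta (last_state q0 \<rho>))"

definition memoryless_scheduler :: "'a set \<Rightarrow> 's set \<Rightarrow> ('s \<Rightarrow> ('a \<times> 's) option pmf set) \<Rightarrow> 's
    \<Rightarrow> (('a \<times> 's) list \<Rightarrow> ('a \<times> 's) option pmf pmf) \<Rightarrow> bool" where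
  "memoryless_scheduler Sig Q Delta q0 \<sigma> \<longleftrightarrow> scheduler Sig Q Delta q0 \<sigma> \<and>
     (\<forall>\<rho>\<in>lists (Sig \<times> Q). \<forall>\<rho>'\<in>lists (Sig \<times> Q).
        last_state q0 \<rho> = last_state q0 \<rho>' \<longrightarrow> \<sigma> \<rho> = \<sigma> \<rho>')"

definition sched_step :: "(('a \<times> 's) list \<Rightarrow> ('a \<times> 's) option pmf pmf) \<Rightarrow> ('a \<times> 's) list \<Rightarrow> ('a \<times> 's) option pmf" where
  "sched_step \<sigma> \<rho> = join_pmf (\<sigma> \<rho>)"

text \<open>Probability P of the complete run rho (rho followed by termination) in B/sigma.\<close>
definition run_prob :: "(('a \<times> 's) list \<Rightarrow> ('a \<times> 's) option pmf pmf) \<Rightarrow> ('a \<times> 's) list \<Rightarrow> real" where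
  "run_prob \<sigma> \<rho> = (\<Prod>i<length \<rho>. pmf (sched_step \<sigma> (take i \<rho>)) (Some (\<rho> ! i)))
                     * pmf (sched_step \<sigma> \<rho>) None"

definition prob_obs :: "'a set \<Rightarrow> 's set \<Rightarrow> (('a \<times> 's) list \<Rightarrow> ('a \<times> 's) option pmf pmf)
    \<Rightarrow> (('a \<times> 's) list \<Rightarrow> 'o) \<Rightarrow> 'o \<Rightarrow> ennreal" where
  "prob_obs Sig Q \<sigma> Obs ob = (\<Sum>\<^sub>\<infinity>\<rho>\<in>{\<rho>\<in>lists (Sig \<times> Q). Obs \<rho> = ob}. ennreal (run_prob \<sigma> \<rho>))"

definition prob_obs_notphi :: "'a set \<Rightarrow> 's set \<Rightarrow> (('a \<times> 's) list \<Rightarrow> ('a \<times> 's) option pmf pmf)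
    \<Rightarrow> ('a \<times> 's) list set \<Rightarrow> (('a \<times> 's) list \<Rightarrow> 'o) \<Rightarrow> 'o \<Rightarrow> ennreal" where
  "prob_obs_notphi Sig Q \<sigma> phi Obs ob =
     (\<Sum>\<^sub>\<infinity>\<rho>\<in>{\<rho>\<in>lists (Sig \<times> Q). Obs \<rho> = ob \<and> \<rho> \<notin> phi}. ennreal (run_prob \<sigma> \<rho>))"

text \<open>1/PO = sum_o P(O=o) / P(1_phi=0 | O=o), computed in ennreal
  (x/0 = infinity for x>0, 0/0 = 0); PO is its inverse (1/infinity = 0).\<close>
definition inv_PO :: "'a set \<Rightarrow> 's set \<Rightarrow> (('a \<times> 's) list \<Rightarrow> ('a \<times> 's) option pmf pmf)
    \<Rightarrow> ('a \<times> 's) list set \<Rightarrow> (('a \<times> 's) list \<Rightarrow> 'o) \<Rightarrow> ennreal" where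
  "inv_PO Sig Q \<sigma> phi Obs =
     (\<Sum>\<^sub>\<infinity>ob. prob_obs Sig Q \<sigma> Obs ob
              / (prob_obs_notphi Sig Q \<sigma> phi Obs ob / prob_obs Sig Q \<sigma> Obs ob))"

definition PO_r :: "'a set \<Rightarrow> 's set \<Rightarrow> (('a \<times> 's) list \<Rightarrow> ('a \<times> 's) option pmf pmf)
    \<Rightarrow> ('a \<times> 's) list set \<Rightarrow> (('a \<times> 's) list \<Rightarrow> 'o) \<Rightarrow> ennreal" where
  "PO_r Sig Q \<sigma> phi Obs = inverse (inv_PO Sig Q \<sigma> phi Obs)"

definition regular_lang :: "'c list set \<Rightarrow> bool" where
  "regular_lang L \<longleftrightarrow> (\<exists>(D::nat set) \<delta> d0 F. finite D \<and> d0 \<in> D \<and> F \<subseteq> D \<and>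
      (\<forall>d\<in>D. \<forall>x. \<delta> d x \<in> D) \<and> L = {w. foldl \<delta> d0 w \<in> F})"

text \<open>Observation functions: static projections of the trace (erasing/renaming actions).\<close>
definition proj_obs :: "('a \<Rightarrow> 'b option) \<Rightarrow> ('a \<times> 's) list \<Rightarrow> 'b list" where
  "proj_obs obs \<rho> = List.map_filter (\<lambda>(a, q). obs a) \<rho>"

end

theory Submission
  imports Defs
begin

definition mu0 :: "(nat \<times> nat) option pmf" where
  "mu0 = pmf_of_set {Some (0,1), Some (1,1)}"

definition DeltaE :: "nat \<Rightarrow> (nat \<times> nat) option pmf set" where
  "DeltaE q = (if q = 0 then {mu0} else if q = 1 then {return_pmf None, return_pmf (Some (2,2))}
               else {return_pmf None})"

definition dE :: "nat \<Rightarrow> nat \<times> nat \<Rightarrow> nat" where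
  "dE d x = (if d = 0 then (if fst x = 0 then 1 else 2) else d)"

definition phiE :: "(nat \<times> nat) list set" where
  "phiE = {w. foldl dE 0 w \<in> {1}}"

definition obsE :: "nat \<Rightarrow> nat option" where
  "obsE a = (if a = 2 then Some 2 else None)"

abbreviation "SE \<equiv> {0::nat,1,2}"

definition RR :: "(nat \<times> nat) list set" where
  "RR = {[(0,1)], [(1,1)], [(0,1),(2,2)], [(1,1),(2,2)]}"

lemma pmf_mu0: "pmf mu0 x = (if x = Some (0,1) \<or> x = Some (1,1) then 1/2 else 0)"
  unfolding mu0_def by (subst pmf_of_set) auto

lemma set_mu0: "set_pmf mu0 = {Some (0,1), Some (1,1)}"
  unfolding mu0_def by simp

lemma npaE: "npa SE SE DeltaE 0"
  unfolding npa_def DeltaE_def by (auto simp: set_mu0)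

lemma regE: "regular_lang phiE"
  unfolding regular_lang_def phiE_def
  apply (rule exI[of _ "{0,1,2}"], rule exI[of _ dE], rule exI[of _ 0], rule exI[of _ "{1}"])
  by (auto simp: dE_def)

lemma run_prob_Nil: "run_prob \<sigma> [] = pmf (sched_step \<sigma> []) None"
  by (simp add: run_prob_def)

lemma run_prob_Cons: "run_prob \<sigma> (x#r) = pmf (sched_step \<sigma> []) (Some x) * run_prob (\<lambda>\<rho>. \<sigma> (x#\<rho>)) r"
  unfolding run_prob_def sched_step_def
  by (simp only: length_Cons prod.lessThan_Suc_shift) (simp add: mult.assoc)

lemma sched_step_shift: "sched_step (\<lambda>\<rho>. \<sigma> (x#\<rho>)) \<rho> = sched_step \<sigma> (x#\<rho>)"
  by (simp add: sched_step_def)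

lemma run_prob_1: "run_prob \<sigma> [x] = pmf (sched_step \<sigma> []) (Some x) * pmf (sched_step \<sigma> [x]) None"
  by (simp add: run_prob_Cons run_prob_Nil sched_step_def)

lemma run_prob_2: "run_prob \<sigma> [x,y] = pmf (sched_step \<sigma> []) (Some x) * pmf (sched_step \<sigma> [x]) (Some y)
   * pmf (sched_step \<sigma> [x,y]) None"
  by (simp add: run_prob_Cons run_prob_Nil sched_step_def mult.assoc)

lemma run_prob_3: "run_prob \<sigma> (x#y#z#r) = pmf (sched_step \<sigma> []) (Some x) * pmf (sched_step \<sigma> [x]) (Some y)
   * pmf (sched_step \<sigma> [x,y]) (Some z) * run_prob (\<lambda>\<rho>. \<sigma> (x#y#z#\<rho>)) r"
  by (simp add: run_prob_Cons sched_step_def mult.assoc)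

lemma step_set:
  assumes "scheduler SE SE DeltaE 0 \<sigma>" "\<rho> \<in> lists (SE \<times> SE)"
  shows "set_pmf (sched_step \<sigma> \<rho>) \<subseteq> \<Union>(set_pmf ` DeltaE (last_state 0 \<rho>))"
  using assms unfolding scheduler_def sched_step_def by auto

lemma step0:
  assumes "scheduler SE SE DeltaE 0 \<sigma>"
  shows "sched_step \<sigma> [] = mu0"
proof -
  have "set_pmf (\<sigma> []) \<subseteq> DeltaE (last_state 0 ([]::(nat\<times>nat) list))" using assms unfolding scheduler_def
    by (metis lists.Nil)
  then have "set_pmf (\<sigma> []) \<subseteq> {mu0}" by (simp add: last_state_def DeltaE_def)
  then have "\<sigma> [] = return_pmf mu0" by (simp add: set_pmf_subset_singleton)
  then show ?thesis by (simp add: sched_step_def join_return_pmf)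
qed

lemma step1:
  assumes "scheduler SE SE DeltaE 0 \<sigma>" "a \<in> SE"
  shows "set_pmf (sched_step \<sigma> [(a,1)]) \<subseteq> {None, Some (2,2)}"
  using step_set[OF assms(1), of "[(a,1)]"] assms(2) by (auto simp: last_state_def DeltaE_def)

lemma step2:
  assumes "scheduler SE SE DeltaE 0 \<sigma>" "\<rho> \<in> lists (SE \<times> SE)" "\<rho> \<noteq> []" "snd (last \<rho>) = 2"
  shows "sched_step \<sigma> \<rho> = return_pmf None"
proof -
  have "set_pmf (sched_step \<sigma> \<rho>) \<subseteq> {None}"
    using step_set[OF assms(1,2)] assms(3,4) by (auto simp: last_state_def DeltaE_def)
  then show ?thesis by (simp add: set_pmf_subset_singleton)
qed

lemma pmf_zero_notin: "x \<notin> set_pmf p \<Longrightarrow> pmf p x = 0"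
  by (simp add: set_pmf_eq)

lemma support:
  assumes "scheduler SE SE DeltaE 0 \<sigma>" "\<rho> \<in> lists (SE \<times> SE)" "\<rho> \<notin> RR"
  shows "run_prob \<sigma> \<rho> = 0"
proof (cases \<rho>)
  case Nil
  then show ?thesis using step0[OF assms(1)] by (simp add: run_prob_Nil pmf_mu0)
next
  case (Cons x r)
  note s0 = step0[OF assms(1)]
  show ?thesis
  proof (cases "x = (0,1) \<or> x = (1,1)")
    case False
    then show ?thesis using Cons s0
      by (cases r; cases "tl r"; auto simp: run_prob_1 run_prob_2 run_prob_3 pmf_mu0
          simp del: One_nat_def)
  next
    case xg: True
    then obtain a where xa: "x = (a,1)" "a \<in> SE" by auto
    have s1: "set_pmf (sched_step \<sigma> [x]) \<subseteq> {None, Some (2,2)}" using step1[OF assms(1) xa(2)] xa by simp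
    show ?thesis
    proof (cases r)
      case Nil
      then show ?thesis using Cons assms(3) xg by (auto simp: RR_def)
    next
      case (Cons y r')
      show ?thesis
      proof (cases "y = (2,2)")
        case False
        then have "pmf (sched_step \<sigma> [x]) (Some y) = 0" using s1 by (intro pmf_zero_notin) auto
        then show ?thesis using \<open>\<rho> = x#r\<close> Cons
          by (cases r'; auto simp: run_prob_2 run_prob_3)
      next
        case True
        show ?thesis
        proof (cases r')
          case Nil
          then show ?thesis using \<open>\<rho> = x#r\<close> Cons True assms(3) xg by (auto simp: RR_def)
        next
          case (Cons z r'')
          have "sched_step \<sigma> [x,y] = return_pmf None"
            using assms(2) \<open>\<rho> = x#r\<close> \<open>r = y#r'\<close> True xa
            by (intro step2[OF assms(1)]) auto
          then show ?thesis using \<open>\<rho> = x#r\<close> \<open>r = y#r'\<close> Cons by (simp add: run_prob_3)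
        qed
      qed
    qed
  qed
qed

lemma infsum_RR:
  fixes f :: "'a \<Rightarrow> ennreal"
  assumes "\<And>x. x \<in> A \<Longrightarrow> x \<notin> R \<Longrightarrow> f x = 0" "finite R"
  shows "infsum f A = sum f (A \<inter> R)"
proof -
  have "infsum f A = infsum f (A \<inter> R)"
    by (rule infsum_cong_neutral) (use assms in auto)
  also have "\<dots> = sum f (A \<inter> R)" using assms(2) by simp
  finally show ?thesis .
qed

lemma finite_RR: "finite RR" by (simp add: RR_def)

lemma prob_obs_eq:
  assumes "scheduler SE SE DeltaE 0 \<sigma>"
  shows "prob_obs SE SE \<sigma> (proj_obs obsE) ob =
    (if ob = [] then ennreal (run_prob \<sigma> [(0,1)]) + ennreal (run_prob \<sigma> [(1,1)])
     else if ob = [2] then ennreal (run_prob \<sigma> [(0,1),(2,2)]) + ennreal (run_prob \<sigma> [(1,1),(2,2)])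
     else 0)" (is "_ = ?rhs")
proof -
  have "prob_obs SE SE \<sigma> (proj_obs obsE) ob =
     sum (\<lambda>\<rho>. ennreal (run_prob \<sigma> \<rho>)) ({\<rho>\<in>lists (SE \<times> SE). proj_obs obsE \<rho> = ob} \<inter> RR)"
    unfolding prob_obs_def
    by (rule infsum_RR[OF _ finite_RR]) (use support[OF assms] in auto)
  also have "\<dots> = (\<Sum>\<rho>\<in>RR. if \<rho> \<in> {\<rho>\<in>lists (SE \<times> SE). proj_obs obsE \<rho> = ob}
        then ennreal (run_prob \<sigma> \<rho>) else 0)"
    by (subst Int_commute, rule sum.inter_restrict[OF finite_RR])
  also have "\<dots> = ?rhs"
    by (simp add: RR_def proj_obs_def obsE_def map_filter_simps)
  finally show ?thesis .
qed

lemma prob_obs_notphi_eq: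
  assumes "scheduler SE SE DeltaE 0 \<sigma>"
  shows "prob_obs_notphi SE SE \<sigma> phiE (proj_obs obsE) ob =
    (if ob = [] then ennreal (run_prob \<sigma> [(1,1)])
     else if ob = [2] then ennreal (run_prob \<sigma> [(1,1),(2,2)])
     else 0)" (is "_ = ?rhs")
proof -
  have "prob_obs_notphi SE SE \<sigma> phiE (proj_obs obsE) ob =
     sum (\<lambda>\<rho>. ennreal (run_prob \<sigma> \<rho>)) ({\<rho>\<in>lists (SE \<times> SE). proj_obs obsE \<rho> = ob \<and> \<rho> \<notin> phiE} \<inter> RR)"
    unfolding prob_obs_notphi_def
    by (rule infsum_RR[OF _ finite_RR]) (use support[OF assms] in auto)
  also have "\<dots> = (\<Sum>\<rho>\<in>RR. if \<rho> \<in> {\<rho>\<in>lists (SE \<times> SE). proj_obs obsE \<rho> = ob \<and> \<rho> \<notin> phiE}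
        then ennreal (run_prob \<sigma> \<rho>) else 0)"
    by (subst Int_commute, rule sum.inter_restrict[OF finite_RR])
  also have "\<dots> = ?rhs"
    by (simp add: RR_def proj_obs_def obsE_def map_filter_simps phiE_def dE_def)
  finally show ?thesis .
qed

lemma inv_PO_eq:
  assumes "scheduler SE SE DeltaE 0 \<sigma>"
  shows "inv_PO SE SE \<sigma> phiE (proj_obs obsE) =
     (\<Sum>ob\<in>{[],[2]}. prob_obs SE SE \<sigma> (proj_obs obsE) ob
        / (prob_obs_notphi SE SE \<sigma> phiE (proj_obs obsE) ob / prob_obs SE SE \<sigma> (proj_obs obsE) ob))"
  unfolding inv_PO_def
  apply (subst infsum_RR[where R="{[],[2]}"])
    apply (subst prob_obs_eq[OF assms], simp)
   apply simp
  apply simp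
  done

lemma Tfin: "0 \<le> a \<Longrightarrow> (ennreal a + ennreal a) / (ennreal a / (ennreal a + ennreal a)) \<noteq> \<top>"
proof (cases "a = 0")
  case False
  assume "0 \<le> a"
  then have a: "0 < a" using False by simp
  have s: "ennreal a + ennreal a = ennreal (a+a)" using a by (metis ennreal_plus less_imp_le)
  have d: "ennreal a / ennreal (a + a) = ennreal (a/(a+a))" using a by (intro divide_ennreal) auto
  have "a/(a+a) > 0" using a by simp
  then have "ennreal (a/(a+a)) \<noteq> 0" by simp
  then show ?thesis unfolding s d by (simp add: ennreal_divide_eq_top_iff)
qed simp

definition sigH :: "(nat \<times> nat) list \<Rightarrow> (nat \<times> nat) option pmf pmf" where
  "sigH \<rho> = return_pmf (if last_state 0 \<rho> = 0 then mu0
      else if \<rho> = [(1,1)] then return_pmf (Some (2,2)) else return_pmf None)"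

lemma sigH_sched: "scheduler SE SE DeltaE 0 sigH"
  unfolding scheduler_def sigH_def
proof
  fix \<rho> :: "(nat \<times> nat) list" assume r: "\<rho> \<in> lists (SE \<times> SE)"
  have "last_state 0 \<rho> \<in> SE"
  proof (cases "\<rho> = []")
    case True then show ?thesis by (simp add: last_state_def)
  next
    case False
    then have "last \<rho> \<in> set \<rho>" by (rule last_in_set)
    then have "last \<rho> \<in> SE \<times> SE" using r by (auto simp: lists_eq_set)
    then have "snd (last \<rho>) \<in> SE" by (rule SigmaE) simp
    then show ?thesis using False by (simp add: last_state_def)
  qed
  then consider "last_state 0 \<rho> = 0" | "last_state 0 \<rho> = 1" | "last_state 0 \<rho> = 2" by auto
  then show "set_pmf (return_pmf (if last_state 0 \<rho> = 0 then mu0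
      else if \<rho> = [(1,1)] then return_pmf (Some (2,2)) else return_pmf None)) \<subseteq> DeltaE (last_state 0 \<rho>)"
    by cases (auto simp: DeltaE_def last_state_def)
qed

lemma sigH_inv: "inv_PO SE SE sigH phiE (proj_obs obsE) = \<top>"
proof -
  have st: "sched_step sigH \<rho> = (if last_state 0 \<rho> = 0 then mu0
      else if \<rho> = [(1,1)] then return_pmf (Some (2,2)) else return_pmf None)" for \<rho>
    by (simp add: sched_step_def sigH_def join_return_pmf)
  have r1: "run_prob sigH [(0,1)] = 1/2"
    by (simp add: run_prob_1 st last_state_def pmf_mu0)
  have r2: "run_prob sigH [(1,1)] = 0"
    by (simp add: run_prob_1 st last_state_def pmf_mu0)
  have "prob_obs SE SE sigH (proj_obs obsE) []
        / (prob_obs_notphi SE SE sigH phiE (proj_obs obsE) [] / prob_obs SE SE sigH (proj_obs obsE) []) = \<top>"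
    apply (subst prob_obs_eq[OF sigH_sched])+
    apply (subst prob_obs_notphi_eq[OF sigH_sched])
    apply (simp only: r1 r2 if_True)
    apply simp
    done
  then show ?thesis by (subst inv_PO_eq[OF sigH_sched]) simp
qed

theorem theorem2:
  shows "\<exists>(Sig::nat set) (Q::nat set) Delta (q0::nat) (phi::(nat \<times> nat) list set) (obs::nat \<Rightarrow> nat option).
     npa Sig Q Delta q0 \<and> regular_lang phi \<and>
     (\<forall>\<sigma>. memoryless_scheduler Sig Q Delta q0 \<sigma> \<longrightarrow>
        PO_r Sig Q \<sigma> phi (proj_obs obs) >
          (INF \<sigma>'\<in>{\<sigma>'. scheduler Sig Q Delta q0 \<sigma>'}. PO_r Sig Q \<sigma>' phi (proj_obs obs)))"
proof (intro exI conjI allI impI)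
  show "npa SE SE DeltaE 0" by (rule npaE)
  show "regular_lang phiE" by (rule regE)
  fix \<sigma> assume m: "memoryless_scheduler SE SE DeltaE 0 \<sigma>"
  then have s: "scheduler SE SE DeltaE 0 \<sigma>" by (simp add: memoryless_scheduler_def)
  have eq1: "\<sigma> [(0,1)] = \<sigma> [(1,1)]"
    using m unfolding memoryless_scheduler_def by (auto simp: last_state_def)
  have st1: "sched_step \<sigma> [(0,1)] = sched_step \<sigma> [(1,1)]" by (simp only: sched_step_def eq1)
  then have st1': "sched_step \<sigma> [(0, Suc 0)] = sched_step \<sigma> [(Suc 0, Suc 0)]" by simp
  have st2: "sched_step \<sigma> [(a,1),(2,2)] = return_pmf None" if "a \<in> SE" for a
    using that by (intro step2[OF s]) auto
  have st2a: "sched_step \<sigma> [(0, Suc 0),(2,2)] = return_pmf None" using st2[of 0] by simp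
  have st2b: "sched_step \<sigma> [(Suc 0, Suc 0),(2,2)] = return_pmf None" using st2[of 1] by simp
  have r1: "run_prob \<sigma> [(0,1)] = run_prob \<sigma> [(1,1)]"
    by (simp add: run_prob_1 st1' step0[OF s] pmf_mu0)
  have r2: "run_prob \<sigma> [(0,1),(2,2)] = run_prob \<sigma> [(1,1),(2,2)]"
    by (simp add: run_prob_2 st1' st2a st2b step0[OF s] pmf_mu0)
  have nn: "0 \<le> run_prob \<sigma> \<rho>" for \<rho>
    by (simp add: run_prob_def prod_nonneg)
  have "inv_PO SE SE \<sigma> phiE (proj_obs obsE) \<noteq> \<top>"
    using Tfin[OF nn[of "[(1,1)]"]] Tfin[OF nn[of "[(1,1),(2,2)]"]]
    apply (subst inv_PO_eq[OF s])
    apply (subst prob_obs_eq[OF s])+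
    apply (subst prob_obs_notphi_eq[OF s])+
    apply (simp only: r1 r2 if_True if_False list.distinct list.inject simp_thms sum.insert
       finite.emptyI finite.insertI singleton_iff insert_iff empty_iff sum.empty add_0_right)
    apply (simp only: ennreal_add_eq_top de_Morgan_disj)
    apply simp
    done
  then have pos: "0 < PO_r SE SE \<sigma> phiE (proj_obs obsE)"
    by (simp add: PO_r_def ennreal_inverse_positive)
  have "(INF \<sigma>'\<in>{\<sigma>'. scheduler SE SE DeltaE 0 \<sigma>'}. PO_r SE SE \<sigma>' phiE (proj_obs obsE))
        \<le> PO_r SE SE sigH phiE (proj_obs obsE)"
    by (rule INF_lower) (use sigH_sched in blast)
  also have "\<dots> = 0" unfolding PO_r_def sigH_inv by simp
  finally show "(INF \<sigma>'\<in>{\<sigma>'. scheduler SE SE DeltaE 0 \<sigma>'}. PO_r SE SE \<sigma>' phiE (proj_obs obsE))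
        < PO_r SE SE \<sigma> phiE (proj_obs obsE)" using pos by simp
qed

end
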